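(* Let $1<n\leq m$ and let $v\in Z_{n,m}$ with $h(v)\geq h_{n,m}$ and $\sum_{i\in I_c(v)}v_i=n$. Then $d(v,0)\leq D_{n,m}$.
   Context: Elements of $\mathbb{Z}_n$ are identified with representatives in $\{0,\dots,n-1\}$ (so $v_0,v_{m+1}$ are such integers in sums). $Z_{n,m}$ has vertices $u=(u_0,\dots,u_{m+1})\in\mathbb{Z}_n\times\{-1,0,1\}^m\times\mathbb{Z}_n$ with $\sum u_i\equiv0\pmod n$; $u,v$ adjacent if there is $0\leq i\leq m$ with $u_j=v_j$ for $j\notin\{i,i+1\}$ and either ($u_i=v_i+1$, $u_{i+1}=v_{i+1}-1$) or ($u_i=v_i-1$, $u_{i+1}=v_{i+1}+1$), arithmetic in coordinates $0,m+1$ in $\mathbb{Z}_n$. $d$ is graph distance, $0$ the all-zero vertex. $\operatorname{Piv}(v)$ is the set of $-1\le p\le m+1$ with $n\mid\sum_{i=0}^pv_i$. $p_l(v)=\max\{p\in\operatorname{Piv}(v):p<\frac m2\}$, $p_r(v)=\min\{p\in\operatorname{Piv}(v):p\ge\frac m2\}$, $I_c(v)=\{p_l(v)+1,\dots,p_r(v)\}$, $h(v)=\min\{|p-\frac m2|:p\in\operatorname{Piv}(v)\}$, $h_{n,m}=\frac n2$ if $2\mid(m-n)$ and $\frac{n+1}2$ otherwise. $u^{(0)}$: $u_i=1$ ($1\le i\le m$), $u_0\equiv-\lfloor\frac{m-n}2\rfloor\pmod n$; for $n<m$, $m-n$ odd, $u^{(1)}$: $u_{\lceil(m+1)/2\rceil}=0$,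 other $u_i=1$ ($1\le i\le m$), $u_0\equiv-\lfloor\frac{m-n}2\rfloor\pmod n$. $D_{n,m}=d(u^{(0)},0)$ if $2\mid(m-n)$, else $\max\{d(u^{(0)},0),d(u^{(1)},0)\}$. *)

theory Defs
  imports Complex_Main "HOL-Library.Extended_Nat"
begin

(* Vertices of Z_{n,m}: functions u :: int => int, coordinates 0..m+1; u 0 and u (m+1)
   are the representatives in {0..n-1}; u i = 0 outside 0..m+1 (canonical encoding). *)
definition inZ :: "int \<Rightarrow> int \<Rightarrow> (int \<Rightarrow> int) \<Rightarrow> bool" where
  "inZ n m u \<longleftrightarrow>
     (\<forall>i. (i < 0 \<or> i > m + 1) \<longrightarrow> u i = 0) \<and>
     u 0 \<in> {0..<n} \<and> u (m + 1) \<in> {0..<n} \<and>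
     (\<forall>i\<in>{1..m}. u i \<in> {-1, 0, 1}) \<and>
     n dvd (\<Sum>i=0..m+1. u i)"

definition coordeq :: "int \<Rightarrow> int \<Rightarrow> int \<Rightarrow> int \<Rightarrow> int \<Rightarrow> bool" where
  "coordeq n m k a b \<longleftrightarrow> (if k = 0 \<or> k = m + 1 then a mod n = b mod n else a = b)"

definition adjZ :: "int \<Rightarrow> int \<Rightarrow> (int \<Rightarrow> int) \<Rightarrow> (int \<Rightarrow> int) \<Rightarrow> bool" where
  "adjZ n m u v \<longleftrightarrow> inZ n m u \<and> inZ n m v \<and>
     (\<exists>i\<in>{0..m}. (\<forall>j\<in>{0..m+1}. j \<noteq> i \<and> j \<noteq> i + 1 \<longrightarrow> u j = v j) \<and>
        ((coordeq n m i (u i) (v i + 1) \<and> coordeq n m (i + 1) (u (i + 1)) (v (i + 1) - 1)) \<or>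
         (coordeq n m i (u i) (v i - 1) \<and> coordeq n m (i + 1) (u (i + 1)) (v (i + 1) + 1))))"

definition distZ :: "int \<Rightarrow> int \<Rightarrow> (int \<Rightarrow> int) \<Rightarrow> (int \<Rightarrow> int) \<Rightarrow> enat" where
  "distZ n m u v = (if \<exists>k. (adjZ n m ^^ k) u v
                     then enat (LEAST k. (adjZ n m ^^ k) u v) else \<infinity>)"

definition zeroV :: "int \<Rightarrow> int" where
  "zeroV = (\<lambda>_. 0)"

definition Piv :: "int \<Rightarrow> int \<Rightarrow> (int \<Rightarrow> int) \<Rightarrow> int set" where
  "Piv n m v = {p. -1 \<le> p \<and> p \<le> m + 1 \<and> n dvd (\<Sum>i=0..p. v i)}"

definition p_l :: "int \<Rightarrow> int \<Rightarrow> (int \<Rightarrow> int) \<Rightarrow> int" where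
  "p_l n m v = Max {p \<in> Piv n m v. real_of_int p < real_of_int m / 2}"

definition p_r :: "int \<Rightarrow> int \<Rightarrow> (int \<Rightarrow> int) \<Rightarrow> int" where
  "p_r n m v = Min {p \<in> Piv n m v. real_of_int p \<ge> real_of_int m / 2}"

definition I_c :: "int \<Rightarrow> int \<Rightarrow> (int \<Rightarrow> int) \<Rightarrow> int set" where
  "I_c n m v = {p_l n m v + 1 .. p_r n m v}"

definition hZ :: "int \<Rightarrow> int \<Rightarrow> (int \<Rightarrow> int) \<Rightarrow> real" where
  "hZ n m v = Min ((\<lambda>p. \<bar>real_of_int p - real_of_int m / 2\<bar>) ` Piv n m v)"

definition h_nm :: "int \<Rightarrow> int \<Rightarrow> real" where
  "h_nm n m = (if even (m - n) then real_of_int n / 2 else (real_of_int n + 1) / 2)"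

(* u^(0): u_i = 1 (1<=i<=m), u_0 = -floor((m-n)/2) mod n, u_{m+1} forced by membership *)
definition u0Z :: "int \<Rightarrow> int \<Rightarrow> (int \<Rightarrow> int)" where
  "u0Z n m = (let c = (- ((m - n) div 2)) mod n in
     (\<lambda>i. if 1 \<le> i \<and> i \<le> m then 1 else if i = 0 then c
          else if i = m + 1 then (- (c + m)) mod n else 0))"

definition u1Z :: "int \<Rightarrow> int \<Rightarrow> (int \<Rightarrow> int)" where
  "u1Z n m = (let c = (- ((m - n) div 2)) mod n in
     (\<lambda>i. if i = \<lceil>real_of_int (m + 1) / 2\<rceil> then 0
          else if 1 \<le> i \<and> i \<le> m then 1 else if i = 0 then c
          else if i = m + 1 then (- (c + m - 1)) mod n else 0))"

definition D_nm :: "int \<Rightarrow> int \<Rightarrow> enat" where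
  "D_nm n m = (if even (m - n) then distZ n m (u0Z n m) zeroV
               else max (distZ n m (u0Z n m) zeroV) (distZ n m (u1Z n m) zeroV))"

end

theory Submission
  imports Defs
begin


definition Sp :: "(int \<Rightarrow> int) \<Rightarrow> int \<Rightarrow> int" where
  "Sp v p = (\<Sum>i=0..p. v i)"

definition Fm :: "int \<Rightarrow> (int \<Rightarrow> int) \<Rightarrow> int \<Rightarrow> int" where
  "Fm m v c = (\<Sum>j=0..m. \<bar>Sp v j - c\<bar>)"

lemma Sp_neg: "p < 0 \<Longrightarrow> Sp v p = 0"
  by (simp add: Sp_def)

lemma Sp_step: "0 \<le> p \<Longrightarrow> Sp v p = Sp v (p-1) + v p"
proof -
  assume "0 \<le> p"
  then have "{0..p} = insert p {0..p-1}" by auto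
  then show ?thesis by (simp add: Sp_def add.commute)
qed

lemma Sp_split: "-1 \<le> a \<Longrightarrow> a \<le> b \<Longrightarrow> Sp v b = Sp v a + (\<Sum>i=a+1..b. v i)"
proof -
  assume "-1 \<le> a" "a \<le> b"
  then have "{0..b} = {0..a} \<union> {a+1..b}" by auto
  moreover have "{0..a} \<inter> {a+1..b} = {}" by auto
  ultimately show ?thesis unfolding Sp_def by (simp add: sum.union_disjoint)
qed

lemma gauss_int: fixes a b :: int shows "a \<le> b + 1 \<Longrightarrow> 2 * (\<Sum>j=a..b. j) = (b - a + 1) * (a + b)"
proof -
  assume "a \<le> b + 1"
  then obtain k :: nat where k: "b = a - 1 + int k" using zle_iff_zadd[of "a - 1" b] by auto
  have "2 * (\<Sum>j=a..a - 1 + int k. j) = (int k) * (2*a + int k - 1)"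
  proof (induction k)
    case 0 then show ?case by simp
  next
    case (Suc k)
    have "{a..a - 1 + int (Suc k)} = insert (a + int k) {a..a - 1 + int k}" by auto
    then have "(\<Sum>j=a..a - 1 + int (Suc k). j) = (a + int k) + (\<Sum>j=a..a - 1 + int k. j)" by simp
    then show ?case using Suc by (simp add: algebra_simps)
  qed
  then show ?thesis unfolding k by (simp add: algebra_simps)
qed




lemma Sp_shift:
  assumes "0 \<le> i" "i \<le> m"
    and d: "\<forall>j\<in>{0..m}. u j = y j + (if j = i then s + t else if j = i+1 then -s else 0)"
    and t0: "i \<noteq> 0 \<longrightarrow> t = 0" and p: "0 \<le> p" "p \<le> m"
  shows "Sp u p = Sp y p + t + (if p = i then s else 0)"
proof -
  have "Sp u p = (\<Sum>j=0..p. y j + ((if j = i then s + t else 0) + (if j = i+1 then -s else 0)))"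
    unfolding Sp_def using d p by (intro sum.cong) auto
  also have "\<dots> = Sp y p + ((if i \<in> {0..p} then s + t else 0) + (if i+1 \<in> {0..p} then -s else 0))"
    unfolding Sp_def sum.distrib by (simp add: sum.delta)
  also have "\<dots> = Sp y p + t + (if p = i then s else 0)"
    using assms by auto
  finally show ?thesis .
qed

lemma sum_abs_bump:
  fixes f :: "int \<Rightarrow> int"
  assumes "i \<in> {0..m}" "\<bar>s\<bar> \<le> 1"
  shows "(\<Sum>p=0..m. \<bar>f p + (if p = i then s else 0)\<bar>) \<le> (\<Sum>p=0..m. \<bar>f p\<bar>) + 1"
proof -
  have "(\<Sum>p=0..m. \<bar>f p + (if p = i then s else 0)\<bar>) \<le> (\<Sum>p=0..m. \<bar>f p\<bar> + (if p = i then 1 else 0))"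
    using assms(2) by (intro sum_mono) auto
  also have "\<dots> = (\<Sum>p=0..m. \<bar>f p\<bar>) + 1"
    using assms(1) by (simp add: sum.distrib sum.delta)
  finally show ?thesis .
qed

lemma sum_abs_dec:
  fixes f :: "int \<Rightarrow> int"
  assumes "i \<in> {0..m}" "s * f i < 0" "\<bar>s\<bar> = 1"
  shows "(\<Sum>p=0..m. \<bar>f p + (if p = i then s else 0)\<bar>) = (\<Sum>p=0..m. \<bar>f p\<bar>) - 1"
proof -
  have "(\<Sum>p=0..m. \<bar>f p + (if p = i then s else 0)\<bar>) = (\<Sum>p=0..m. \<bar>f p\<bar> + (if p = i then -1 else 0))"
  proof (intro sum.cong refl)
    fix p assume "p \<in> {0..m}"
    show "\<bar>f p + (if p = i then s else 0)\<bar> = \<bar>f p\<bar> + (if p = i then -1 else 0)"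
    proof (cases "p = i")
      case True
      have "s = 1 \<or> s = -1" using assms(3) by auto
      then show ?thesis using True assms(2) by (auto simp: zero_less_mult_iff mult_less_0_iff)
    qed simp
  qed
  also have "\<dots> = (\<Sum>p=0..m. \<bar>f p\<bar>) - 1"
    using assms(1) by (simp add: sum.distrib sum.delta)
  finally show ?thesis .
qed

lemma adj_lower:
  assumes adj: "adjZ n m u y" and m1: "1 \<le> m"
  shows "\<exists>t. n dvd t \<and> (\<forall>c. Fm m u (c + t) \<le> Fm m y c + 1)"
proof -
  from adj obtain i where i: "i \<in> {0..m}"
    and same: "\<forall>j\<in>{0..m+1}. j \<noteq> i \<and> j \<noteq> i + 1 \<longrightarrow> u j = y j"
    and cs: "(coordeq n m i (u i) (y i + 1) \<and> coordeq n m (i + 1) (u (i + 1)) (y (i + 1) - 1)) \<or>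
         (coordeq n m i (u i) (y i - 1) \<and> coordeq n m (i + 1) (u (i + 1)) (y (i + 1) + 1))"
    unfolding adjZ_def by blast
  obtain s where s: "s = 1 \<or> s = -1"
    and c1: "coordeq n m i (u i) (y i + s)" and c2: "coordeq n m (i + 1) (u (i + 1)) (y (i + 1) - s)"
  proof -
    from cs show thesis
    proof
      assume h: "coordeq n m i (u i) (y i + 1) \<and> coordeq n m (i + 1) (u (i + 1)) (y (i + 1) - 1)"
      show thesis by (rule that[of 1]) (use h in auto)
    next
      assume h: "coordeq n m i (u i) (y i - 1) \<and> coordeq n m (i + 1) (u (i + 1)) (y (i + 1) + 1)"
      show thesis by (rule that[of "-1"]) (use h in auto)
    qed
  qed
  define t where "t = u i - y i - s"
  have t0: "i \<noteq> 0 \<longrightarrow> t = 0" using c1 i unfolding coordeq_def t_def by auto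
  have tdvd: "n dvd t"
  proof (cases "i = 0")
    case True
    then have "u i mod n = (y i + s) mod n" using c1 unfolding coordeq_def by auto
    then show ?thesis unfolding t_def by (simp add: mod_eq_dvd_iff diff_diff_eq)
  next
    case False then show ?thesis using t0 by simp
  qed
  have d: "\<forall>j\<in>{0..m}. u j = y j + (if j = i then s + t else if j = i+1 then -s else 0)"
  proof
    fix j assume j: "j \<in> {0..m}"
    show "u j = y j + (if j = i then s + t else if j = i+1 then -s else 0)"
    proof (cases "j = i")
      case True then show ?thesis unfolding t_def by simp
    next
      case False
      show ?thesis
      proof (cases "j = i + 1")
        case True
        then have "i + 1 \<noteq> 0" "i + 1 \<noteq> m + 1" using j i by auto
        then have "u (i+1) = y (i+1) - s" using c2 unfolding coordeq_def by auto
        then show ?thesis using True False by simp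
      next
        case False2: False
        then show ?thesis using same j False by auto
      qed
    qed
  qed
  have "\<forall>c. Fm m u (c + t) \<le> Fm m y c + 1"
  proof
    fix c
    have "Fm m u (c + t) = (\<Sum>p=0..m. \<bar>(Sp y p - c) + (if p = i then s else 0)\<bar>)"
      unfolding Fm_def
    proof (intro sum.cong refl)
      fix p assume p: "p \<in> {0..m}"
      have "Sp u p = Sp y p + t + (if p = i then s else 0)"
        using Sp_shift[of i m u y s t p] i d t0 p by auto
      then show "\<bar>Sp u p - (c + t)\<bar> = \<bar>(Sp y p - c) + (if p = i then s else 0)\<bar>" by simp
    qed
    also have "\<dots> \<le> Fm m y c + 1"
      unfolding Fm_def using sum_abs_bump[OF i, of s "\<lambda>p. Sp y p - c"] s by auto
    finally show "Fm m u (c + t) \<le> Fm m y c + 1" .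
  qed
  then show ?thesis using tdvd by blast
qed

lemma Fm_zero: "Fm m zeroV 0 = 0"
  unfolding Fm_def Sp_def zeroV_def by simp

lemma walk_lower:
  assumes "1 \<le> m"
  shows "(adjZ n m ^^ k) u zeroV \<Longrightarrow> \<exists>c. n dvd c \<and> Fm m u c \<le> int k"
proof (induction k arbitrary: u)
  case 0
  then show ?case using Fm_zero by auto
next
  case (Suc k)
  then obtain y where a: "adjZ n m u y" and w: "(adjZ n m ^^ k) y zeroV"
    using relpowp_Suc_D2 by metis
  obtain c where c: "n dvd c" "Fm m y c \<le> int k" using Suc.IH[OF w] by blast
  obtain t where t: "n dvd t" "\<forall>c. Fm m u (c + t) \<le> Fm m y c + 1"
    using adj_lower[OF a assms] by blast
  have "n dvd c + t" using c t by simp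
  moreover have "Fm m u (c + t) \<le> int (Suc k)" using t(2) c(2) by (metis add_mono_thms_linordered_semiring(3) of_nat_Suc add.commute order_trans)
  ultimately show ?case by blast
qed

lemma dist_lower:
  assumes "1 \<le> m" and K: "\<And>c. n dvd c \<Longrightarrow> int K \<le> Fm m u c"
  shows "enat K \<le> distZ n m u zeroV"
proof (cases "\<exists>k. (adjZ n m ^^ k) u zeroV")
  case True
  define L where "L = (LEAST k. (adjZ n m ^^ k) u zeroV)"
  have "(adjZ n m ^^ L) u zeroV" unfolding L_def using True by (rule LeastI_ex)
  then obtain c where "n dvd c" "Fm m u c \<le> int L" using walk_lower[OF assms(1)] by blast
  then have "K \<le> L" using K by force
  then show ?thesis unfolding distZ_def L_def using True by simp
next
  case False
  then show ?thesis unfolding distZ_def by simp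
qed




definition fx :: "int \<Rightarrow> int \<Rightarrow> int \<Rightarrow> int \<Rightarrow> int" where
  "fx n m i x = (if i = 0 \<or> i = m + 1 then x mod n else x)"

definition mv :: "int \<Rightarrow> int \<Rightarrow> (int \<Rightarrow> int) \<Rightarrow> int \<Rightarrow> int \<Rightarrow> (int \<Rightarrow> int)" where
  "mv n m v j s = (\<lambda>i. if i = j then fx n m i (v i - s) else if i = j + 1 then fx n m i (v i + s) else v i)"

lemma fx_dvd: "n dvd (fx n m i x - x)"
  unfolding fx_def by (simp add: mod_eq_dvd_iff[symmetric] mod_diff_left_eq[symmetric])

lemma Sp_at0: "Sp v 0 = v 0" unfolding Sp_def by simp

lemma mv_props:
  assumes Z: "inZ n m v" and n1: "1 < n" and m1: "1 \<le> m" and j: "0 \<le> j" "j \<le> m"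
    and s: "s = 1 \<or> s = -1"
    and cj: "1 \<le> j \<Longrightarrow> v j - s \<in> {-1,0,1}"
    and cj1: "j + 1 \<le> m \<Longrightarrow> v (j+1) + s \<in> {-1,0,1}"
  shows "adjZ n m v (mv n m v j s)"
    and "\<exists>t. n dvd t \<and> (\<forall>p\<in>{0..m}. Sp (mv n m v j s) p = Sp v p + t + (if p = j then -s else 0))"
proof -
  define w where "w = mv n m v j s"
  define t1 where "t1 = fx n m j (v j - s) - (v j - s)"
  define t2 where "t2 = fx n m (j+1) (v (j+1) + s) - (v (j+1) + s)"
  have t1d: "n dvd t1" unfolding t1_def by (rule fx_dvd)
  have t2d: "n dvd t2" unfolding t2_def by (rule fx_dvd)
  have t10: "j \<noteq> 0 \<longrightarrow> t1 = 0" using j unfolding t1_def fx_def by auto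
  have wexp: "\<And>i. w i = v i + (if i = j then -s + t1 else 0) + (if i = j+1 then s + t2 else 0)"
    unfolding w_def mv_def t1_def t2_def by auto
  have Zv: "(\<forall>i. (i < 0 \<or> i > m + 1) \<longrightarrow> v i = 0)" "v 0 \<in> {0..<n}" "v (m + 1) \<in> {0..<n}"
     "(\<forall>i\<in>{1..m}. v i \<in> {-1, 0, 1})" "n dvd (\<Sum>i=0..m+1. v i)"
    using Z unfolding inZ_def by auto
  have Zw: "inZ n m w"
    unfolding inZ_def
  proof (intro conjI)
    show "\<forall>i. i < 0 \<or> m + 1 < i \<longrightarrow> w i = 0" using Zv(1) j unfolding w_def mv_def by auto
    show "w 0 \<in> {0..<n}" using Zv(2) j n1 unfolding w_def mv_def fx_def by auto
    show "w (m+1) \<in> {0..<n}" using Zv(3) j n1 m1 unfolding w_def mv_def fx_def by auto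
    show "\<forall>i\<in>{1..m}. w i \<in> {-1, 0, 1}"
    proof
      fix i assume i: "i \<in> {1..m}"
      show "w i \<in> {-1, 0, 1}"
      proof (cases "i = j")
        case True then show ?thesis using cj i unfolding w_def mv_def fx_def by auto
      next
        case False
        show ?thesis
        proof (cases "i = j + 1")
          case True then show ?thesis using cj1 i False unfolding w_def mv_def fx_def by auto
        next
          case False2: False then show ?thesis using Zv(4) i False unfolding w_def mv_def by auto
        qed
      qed
    qed
    have "(\<Sum>i=0..m+1. w i) = (\<Sum>i=0..m+1. v i) + (\<Sum>i=0..m+1. (if i = j then -s + t1 else 0)) + (\<Sum>i=0..m+1. (if i = j+1 then s + t2 else 0))"
      unfolding wexp sum.distrib by simp
    also have "\<dots> = (\<Sum>i=0..m+1. v i) + t1 + t2" using j by (simp add: sum.delta)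
    finally show "n dvd (\<Sum>i=0..m+1. w i)" using Zv(5) t1d t2d by simp
  qed
  show "adjZ n m v (mv n m v j s)"
    unfolding adjZ_def w_def[symmetric]
  proof (intro conjI)
    show "inZ n m v" by fact
    show "inZ n m w" by fact
    have same: "\<forall>j'\<in>{0..m+1}. j' \<noteq> j \<and> j' \<noteq> j + 1 \<longrightarrow> v j' = w j'" unfolding w_def mv_def by auto
    have e1: "coordeq n m j (v j) (w j + s)"
      unfolding coordeq_def w_def mv_def fx_def by (auto simp: mod_add_left_eq)
    have e2: "coordeq n m (j+1) (v (j+1)) (w (j+1) - s)"
      unfolding coordeq_def w_def mv_def fx_def by (auto simp: mod_diff_left_eq)
    show "\<exists>i\<in>{0..m}. (\<forall>j\<in>{0..m+1}. j \<noteq> i \<and> j \<noteq> i + 1 \<longrightarrow> v j = w j) \<and>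
        ((coordeq n m i (v i) (w i + 1) \<and> coordeq n m (i + 1) (v (i + 1)) (w (i + 1) - 1)) \<or>
         (coordeq n m i (v i) (w i - 1) \<and> coordeq n m (i + 1) (v (i + 1)) (w (i + 1) + 1)))"
      using j same e1 e2 s by (intro bexI[of _ j]) auto
  qed
  have d: "\<forall>i\<in>{0..m}. w i = v i + (if i = j then -s + t1 else if i = j+1 then - (-s) else 0)"
  proof
    fix i assume i: "i \<in> {0..m}"
    show "w i = v i + (if i = j then -s + t1 else if i = j+1 then - (-s) else 0)"
      using i j unfolding w_def mv_def fx_def t1_def by auto
  qed
  have "\<forall>p\<in>{0..m}. Sp w p = Sp v p + t1 + (if p = j then -s else 0)"
    using Sp_shift[of j m w v "-s" t1] j d t10 by auto
  then show "\<exists>t. n dvd t \<and> (\<forall>p\<in>{0..m}. Sp (mv n m v j s) p = Sp v p + t + (if p = j then -s else 0))"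
    using t1d unfolding w_def by blast
qed

lemma dvd_small_zero: "0 \<le> (c::int) \<Longrightarrow> c < n \<Longrightarrow> n dvd c \<Longrightarrow> c = 0"
  using zdvd_imp_le by fastforce

lemma zero_case:
  assumes Z: "inZ n m v" and n1: "1 < n" and m0: "0 \<le> m" and c: "n dvd c" and F: "Fm m v c \<le> 0"
  shows "v = zeroV"
proof -
  have all: "\<forall>p\<in>{0..m}. Sp v p = c"
  proof -
    have "\<forall>p\<in>{0..m}. \<bar>Sp v p - c\<bar> = 0"
      using F unfolding Fm_def by (subst sum_nonneg_eq_0_iff[symmetric]) (auto intro: antisym sum_nonneg)
    then show ?thesis by auto
  qed
  have "v 0 = c" using all m0 Sp_at0[of v] by auto
  then have c0: "c = 0" using Z c unfolding inZ_def by (auto intro: dvd_small_zero)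
  have mid: "\<forall>p\<in>{1..m}. v p = 0"
  proof
    fix p assume p: "p \<in> {1..m}"
    then show "v p = 0" using Sp_step[of p v] all by auto
  qed
  have "Sp v (m+1) = v (m+1)" using Sp_step[of "m+1" v] all m0 c0 by auto
  then have "n dvd v (m+1)" using Z unfolding inZ_def Sp_def by auto
  then have top: "v (m+1) = 0" using Z unfolding inZ_def by (auto intro: dvd_small_zero)
  show ?thesis
  proof
    fix i
    show "v i = zeroV i"
      using Z mid top \<open>v 0 = c\<close> c0 unfolding inZ_def zeroV_def
      by (cases "i < 0 \<or> i > m + 1"; cases "i = 0"; cases "i = m+1"; auto)
  qed
qed

lemma argmax_ex: "\<exists>j\<in>{0..(m::int)}. \<forall>p\<in>{0..m}. f p \<le> (f j :: int)" if "0 \<le> m"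
proof -
  have "Max (f ` {0..m}) \<in> f ` {0..m}" using that by (intro Max_in) auto
  then obtain j where "j \<in> {0..m}" "f j = Max (f ` {0..m})" by auto
  then show ?thesis by (metis Max_ge finite_atLeastAtMost_int finite_imageI image_eqI)
qed

lemma argmin_ex: "\<exists>j\<in>{0..(m::int)}. \<forall>p\<in>{0..m}. f j \<le> (f p :: int)" if "0 \<le> m"
  using argmax_ex[OF that, of "\<lambda>p. - f p"] by auto

lemma walk_upper:
  assumes n1: "1 < n" and m1: "1 \<le> m"
  shows "\<forall>v c. inZ n m v \<longrightarrow> n dvd c \<longrightarrow> Fm m v c \<le> int N \<longrightarrow> (\<exists>k\<le>N. (adjZ n m ^^ k) v zeroV)"
proof (induction N)
  case 0
  show ?case using zero_case n1 m1 by fastforce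
next
  case (Suc N)
  show ?case
  proof (intro allI impI)
    fix v c assume Z: "inZ n m v" and c: "n dvd c" and F: "Fm m v c \<le> int (Suc N)"
    have vr: "\<forall>i\<in>{1..m}. v i \<in> {-1, 0, 1}" using Z unfolding inZ_def by auto
    show "\<exists>k\<le>Suc N. (adjZ n m ^^ k) v zeroV"
    proof (cases "Fm m v c \<le> 0")
      case True
      then have "v = zeroV" using zero_case Z n1 m1 c by auto
      then show ?thesis by (intro exI[of _ 0]) auto
    next
      case False
      have step: "\<exists>k\<le>Suc N. (adjZ n m ^^ k) v zeroV"
        if j: "j \<in> {0..m}" and s: "s = 1 \<or> s = -1" and sf: "s * (Sp v j - c) > 0"
          and cj: "1 \<le> j \<Longrightarrow> v j - s \<in> {-1,0,1}"
          and cj1: "j + 1 \<le> m \<Longrightarrow> v (j+1) + s \<in> {-1,0,1}" for j s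
      proof -
        define w where "w = mv n m v j s"
        have a: "adjZ n m v w" unfolding w_def using mv_props(1)[OF Z n1 m1 _ _ s cj cj1] j by auto
        obtain t where t: "n dvd t" "\<forall>p\<in>{0..m}. Sp w p = Sp v p + t + (if p = j then -s else 0)"
          using mv_props(2)[OF Z n1 m1 _ _ s cj cj1] j unfolding w_def by auto
        have "Fm m w (c + t) = (\<Sum>p=0..m. \<bar>(Sp v p - c) + (if p = j then -s else 0)\<bar>)"
          unfolding Fm_def using t(2) by (intro sum.cong) auto
        also have "\<dots> = Fm m v c - 1"
          unfolding Fm_def using sum_abs_dec[OF j, of "-s" "\<lambda>p. Sp v p - c"] s sf by auto
        finally have "Fm m w (c + t) \<le> int N" using F by simp
        moreover have "inZ n m w" using a unfolding adjZ_def by auto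
        moreover have "n dvd c + t" using c t by simp
        ultimately obtain k where k: "k \<le> N" "(adjZ n m ^^ k) w zeroV" using Suc.IH by blast
        have "(adjZ n m ^^ Suc k) v zeroV" using relpowp_Suc_I2[of "adjZ n m" v w k zeroV] a k(2) by blast
        then show ?thesis using k(1) by (meson Suc_le_mono)
      qed
      have "\<exists>p\<in>{0..m}. Sp v p \<noteq> c"
      proof (rule ccontr)
        assume "\<not> ?thesis"
        then have "Fm m v c = 0" unfolding Fm_def by simp
        then show False using False by simp
      qed
      then show ?thesis
      proof (cases "\<exists>p\<in>{0..m}. Sp v p > c")
        case True
        obtain j where j: "j \<in> {0..m}" and jm: "\<forall>p\<in>{0..m}. Sp v p \<le> Sp v j"
          using argmax_ex[of m "Sp v"] m1 by auto
        have gt: "Sp v j > c" using True jm by force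
        show ?thesis
        proof (rule step[OF j, of 1])
          show "1 * (Sp v j - c) > 0" using gt by simp
          assume "1 \<le> j"
          then have "v j = Sp v j - Sp v (j-1)" using Sp_step[of j v] by simp
          moreover have "Sp v (j-1) \<le> Sp v j" using jm \<open>1 \<le> j\<close> j by auto
          ultimately show "v j - 1 \<in> {-1,0,1}" using vr[rule_format, of j] \<open>1 \<le> j\<close> j by auto
        next
          assume "j + 1 \<le> m"
          then have "v (j+1) = Sp v (j+1) - Sp v j" using Sp_step[of "j+1" v] j by simp
          moreover have "Sp v (j+1) \<le> Sp v j" using jm \<open>j + 1 \<le> m\<close> j by auto
          ultimately show "v (j+1) + 1 \<in> {-1,0,1}" using vr[rule_format, of "j+1"] \<open>j + 1 \<le> m\<close> j by auto
        qed simp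
      next
        case False
        then obtain p0 where p0: "p0 \<in> {0..m}" "Sp v p0 < c" using \<open>\<exists>p\<in>{0..m}. Sp v p \<noteq> c\<close> by force
        obtain j where j: "j \<in> {0..m}" and jm: "\<forall>p\<in>{0..m}. Sp v j \<le> Sp v p"
          using argmin_ex[of m "Sp v"] m1 by auto
        have lt: "Sp v j < c" using p0 jm by force
        show ?thesis
        proof (rule step[OF j, of "-1"])
          show "-1 * (Sp v j - c) > 0" using lt by simp
          assume "1 \<le> j"
          then have "v j = Sp v j - Sp v (j-1)" using Sp_step[of j v] by simp
          moreover have "Sp v j \<le> Sp v (j-1)" using jm \<open>1 \<le> j\<close> j by auto
          ultimately show "v j - -1 \<in> {-1,0,1}" using vr[rule_format, of j] \<open>1 \<le> j\<close> j by auto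
        next
          assume "j + 1 \<le> m"
          then have "v (j+1) = Sp v (j+1) - Sp v j" using Sp_step[of "j+1" v] j by simp
          moreover have "Sp v j \<le> Sp v (j+1)" using jm \<open>j + 1 \<le> m\<close> j by auto
          ultimately show "v (j+1) + -1 \<in> {-1,0,1}" using vr[rule_format, of "j+1"] \<open>j + 1 \<le> m\<close> j by auto
        qed simp
      qed
    qed
  qed
qed

lemma dist_upper:
  assumes "1 < n" "1 \<le> m" "inZ n m v" "n dvd c"
  shows "distZ n m v zeroV \<le> enat (nat (Fm m v c))"
proof -
  have "Fm m v c \<le> int (nat (Fm m v c))" by simp
  then obtain k where k: "k \<le> nat (Fm m v c)" "(adjZ n m ^^ k) v zeroV"
    using walk_upper[OF assms(1,2), of "nat (Fm m v c)"] assms(3,4) by blast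
  then have "(LEAST k. (adjZ n m ^^ k) v zeroV) \<le> k" by (intro Least_le)
  then show ?thesis unfolding distZ_def using k by auto
qed




lemma lip:
  assumes Z: "inZ n m v" and "0 \<le> a" "a \<le> b" "b \<le> m"
  shows "\<bar>Sp v b - Sp v a\<bar> \<le> b - a"
proof -
  obtain k :: nat where k: "b = a + int k" using assms(3) zle_iff_zadd by auto
  have vr: "\<forall>i\<in>{1..m}. v i \<in> {-1, 0, 1}" using Z unfolding inZ_def by auto
  have "a + int k \<le> m \<Longrightarrow> \<bar>Sp v (a + int k) - Sp v a\<bar> \<le> int k"
  proof (induction k)
    case 0 then show ?case by simp
  next
    case (Suc k)
    have "Sp v (a + int (Suc k)) = Sp v (a + int k) + v (a + int (Suc k))"
      using Sp_step[of "a + int (Suc k)" v] assms(2) by simp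
    moreover have "v (a + int (Suc k)) \<in> {-1,0,1}" using vr Suc.prems assms(2) by auto
    moreover have "\<bar>Sp v (a + int k) - Sp v a\<bar> \<le> int k" using Suc by simp
    ultimately show ?case by auto
  qed
  then show ?thesis using k assms by simp
qed

lemma same_block:
  fixes x y n :: int
  assumes "\<bar>x - y\<bar> \<le> 1" "\<not> n dvd x" "\<not> n dvd y" "1 < n"
  shows "x div n = y div n"
proof (rule ccontr)
  assume ne: "x div n \<noteq> y div n"
  have hx: "n * (x div n) \<le> x" "x < n * (x div n) + n" using assms(4)
    by (simp_all add: mult.commute pos_mod_bound[of n x] minus_mod_eq_mult_div[symmetric]) 
  have hy: "n * (y div n) \<le> y" "y < n * (y div n) + n" using assms(4)
    by (simp_all add: mult.commute pos_mod_bound[of n y] minus_mod_eq_mult_div[symmetric])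
  have nx: "n * (x div n) \<noteq> x" using assms(2) by (metis dvd_triv_left)
  have ny: "n * (y div n) \<noteq> y" using assms(3) by (metis dvd_triv_left)
  show False
  proof (cases "x div n < y div n")
    case True
    then have "x div n + 1 \<le> y div n" by simp
    then have "n * (x div n + 1) \<le> n * (y div n)" using assms(4) by (intro mult_left_mono) auto
    then have "n * (x div n) + n \<le> n * (y div n)" by (simp add: algebra_simps)
    then show False using hx hy nx ny assms(1) by linarith
  next
    case False
    then have "y div n + 1 \<le> x div n" using ne by simp
    then have "n * (y div n + 1) \<le> n * (x div n)" using assms(4) by (intro mult_left_mono) auto
    then have "n * (y div n) + n \<le> n * (x div n)" by (simp add: algebra_simps)
    then show False using hx hy nx ny assms(1) by linarith
  qed
qed




lemma sum_card_int: "a \<le> b + 1 \<Longrightarrow> (\<Sum>j=a..(b::int). (c::int)) = (b - a + 1) * c"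
  by simp

lemma sumA:
  fixes e m :: int
  assumes "0 \<le> e" "e \<le> m"
  shows "2 * (\<Sum>j=0..m. max 0 (e - j)) = e * (e + 1)"
proof -
  have "(\<Sum>j=0..m. max 0 (e - j)) = (\<Sum>j=0..e. e - j)"
    using assms by (intro sum.mono_neutral_cong_right) auto
  also have "\<dots> = (\<Sum>j=0..e. e) - (\<Sum>j=0..e. j)" by (simp add: sum_subtractf)
  finally have "2 * (\<Sum>j=0..m. max 0 (e - j)) = 2 * (\<Sum>j=0..e. e) - 2 * (\<Sum>j=0..e. j)" by simp
  also have "\<dots> = 2 * ((e + 1) * e) - (e + 1) * e" using gauss_int[of 0 e] assms by simp
  finally show ?thesis by (simp add: algebra_simps)
qed

lemma sumB:
  fixes e m :: int
  assumes "0 \<le> e" "e \<le> m"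
  shows "2 * (\<Sum>j=0..m. max 0 (j - (m - e))) = e * (e + 1)"
proof -
  have "(\<Sum>j=0..m. max 0 (j - (m - e))) = (\<Sum>j=m-e..m. j - (m - e))"
    using assms by (intro sum.mono_neutral_cong_right) auto
  also have "\<dots> = (\<Sum>j=m-e..m. j) - (\<Sum>j=m-e..m. m - e)" by (simp add: sum_subtractf)
  finally have "2 * (\<Sum>j=0..m. max 0 (j - (m - e))) = 2 * (\<Sum>j=m-e..m. j) - 2 * (\<Sum>j=m-e..m. m - e)" by simp
  also have "\<dots> = (e + 1) * (2 * m - e) - 2 * ((e + 1) * (m - e))" using gauss_int[of "m-e" m] assms by simp
  finally show ?thesis by (simp add: algebra_simps)
qed


lemma partC:
  fixes n m :: int and v :: "int \<Rightarrow> int"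
  assumes n1: "1 < n" and nm: "n \<le> m" and Z: "inZ n m v"
    and H: "hZ n m v \<ge> h_nm n m" and I: "(\<Sum>i\<in>I_c n m v. v i) = n"
  shows "\<exists>c. n dvd c \<and> 2 * Fm m v c \<le> (m+1)*n + 2*((m-n) div 2)*((m-n) div 2 + 1)"
proof -
  define e where "e = (m-n) div 2"
  have e0: "0 \<le> e" "2*e \<le> m - n" "m - n \<le> 2*e + 1" using nm unfolding e_def by auto
  define P where "P = Piv n m v"
  have finP: "finite P"
  proof -
    have "P \<subseteq> {-1..m+1}" unfolding P_def Piv_def by auto
    then show ?thesis by (rule finite_subset) simp
  qed
  have Zv: "(\<forall>i. (i < 0 \<or> i > m + 1) \<longrightarrow> v i = 0)" "v 0 \<in> {0..<n}" "v (m + 1) \<in> {0..<n}"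
     "(\<forall>i\<in>{1..m}. v i \<in> {-1, 0, 1})" "n dvd (\<Sum>i=0..m+1. v i)"
    using Z unfolding inZ_def by auto
  have m1P: "-1 \<in> P" unfolding P_def Piv_def using nm n1 by auto
  have mP: "m+1 \<in> P" unfolding P_def Piv_def using nm n1 Zv(5) by auto
  define L where "L = {p \<in> P. real_of_int p < real_of_int m / 2}"
  define R where "R = {p \<in> P. real_of_int p \<ge> real_of_int m / 2}"
  define pl where "pl = p_l n m v"
  define pr where "pr = p_r n m v"
  have plM: "pl = Max L" unfolding pl_def p_l_def L_def P_def by simp
  have prM: "pr = Min R" unfolding pr_def p_r_def R_def P_def by simp
  have finL: "finite L" "L \<noteq> {}" using finP m1P nm n1 unfolding L_def by auto
  have finR: "finite R" "R \<noteq> {}" using finP mP nm n1 unfolding R_def by auto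
  have plL: "pl \<in> L" using finL plM by (simp add: Max_in)
  have plmax: "\<And>p. p \<in> L \<Longrightarrow> p \<le> pl" using finL plM by simp
  have prR: "pr \<in> R" using finR prM by (simp add: Min_in)
  have prmin: "\<And>p. p \<in> R \<Longrightarrow> pr \<le> p" using finR prM by simp
  have hbound: "\<And>p. p \<in> P \<Longrightarrow> real_of_int n / 2 \<le> \<bar>real_of_int p - real_of_int m / 2\<bar>"
  proof -
    fix p assume p: "p \<in> P"
    have "hZ n m v \<le> \<bar>real_of_int p - real_of_int m / 2\<bar>"
      unfolding hZ_def P_def[symmetric] using finP p by (intro Min_le) auto
    moreover have "real_of_int n / 2 \<le> h_nm n m" unfolding h_nm_def by auto
    ultimately show "real_of_int n / 2 \<le> \<bar>real_of_int p - real_of_int m / 2\<bar>" using H by linarith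
  qed
  have "real_of_int pl < real_of_int m / 2" "pl \<in> P" using plL unfolding L_def by auto
  then have "real_of_int n / 2 \<le> real_of_int m / 2 - real_of_int pl" using hbound by force
  then have "real_of_int (2 * pl) \<le> real_of_int (m - n)" by simp
  then have pl_le: "2 * pl \<le> m - n" by linarith
  have "real_of_int pr \<ge> real_of_int m / 2" "pr \<in> P" using prR unfolding R_def by auto
  then have "real_of_int n / 2 \<le> real_of_int pr - real_of_int m / 2" using hbound by force
  then have "real_of_int (m + n) \<le> real_of_int (2 * pr)" by simp
  then have pr_ge: "m + n \<le> 2 * pr" by linarith
  have plr: "-1 \<le> pl" "pr \<le> m + 1" using \<open>pl \<in> P\<close> \<open>pr \<in> P\<close> unfolding P_def Piv_def by auto
  have ple: "pl \<le> e" using pl_le e0 by linarith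
  have pre: "m - e \<le> pr" using pr_ge e0 by linarith
  define \<alpha> where "\<alpha> = Sp v pl"
  have adv: "n dvd \<alpha>" using \<open>pl \<in> P\<close> unfolding \<alpha>_def P_def Piv_def Sp_def by auto
  have beta: "Sp v pr = \<alpha> + n"
    using Sp_split[of pl pr v] plr pl_le pr_ge n1 I unfolding \<alpha>_def I_c_def pl_def[symmetric] pr_def[symmetric]
    by simp
  have nonpiv: "\<And>j. pl < j \<Longrightarrow> j < pr \<Longrightarrow> \<not> n dvd Sp v j"
  proof
    fix j assume j: "pl < j" "j < pr" and d: "n dvd Sp v j"
    then have jP: "j \<in> P" unfolding P_def Piv_def Sp_def using plr by auto
    show False
    proof (cases "real_of_int j < real_of_int m / 2")
      case True then have "j \<in> L" using jP unfolding L_def by auto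
      then show False using plmax j by force
    next
      case False then have "j \<in> R" using jP unfolding R_def by auto
      then show False using prmin j by force
    qed
  qed
  define f where "f = pl + 1"
  define l where "l = min (pr - 1) m"
  have fl: "0 \<le> f" "f \<le> l" "l \<le> m" "pl < f" "l < pr" unfolding f_def l_def using plr pl_le pr_ge n1 by auto
  have hf: "Sp v f \<le> \<alpha> + n - 1"
  proof (cases "pl = -1")
    case True
    then have "Sp v f = v 0" "\<alpha> = 0" unfolding f_def \<alpha>_def using Sp_at0 Sp_neg by auto
    then show ?thesis using Zv(2) by auto
  next
    case False
    then have "\<bar>Sp v f - Sp v pl\<bar> \<le> f - pl" using lip[OF Z, of pl f] plr fl by auto
    then show ?thesis unfolding \<alpha>_def f_def using n1 by auto
  qed
  have hl: "\<alpha> + 1 \<le> Sp v l"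
  proof (cases "pr \<le> m")
    case True
    then have "l = pr - 1" unfolding l_def by auto
    then have "\<bar>Sp v pr - Sp v l\<bar> \<le> pr - l" using lip[OF Z, of l pr] fl True by auto
    then show ?thesis using beta \<open>l = pr - 1\<close> n1 by auto
  next
    case False
    then have "pr = m + 1" "l = m" using plr unfolding l_def by auto
    then have "Sp v pr = Sp v l + v (m+1)" using Sp_step[of "m+1" v] nm n1 by auto
    then show ?thesis using beta Zv(3) by auto
  qed
  have block: "\<And>i::nat. f + int i \<le> l \<Longrightarrow> Sp v (f + int i) div n = Sp v f div n"
  proof -
    fix i :: nat
    show "f + int i \<le> l \<Longrightarrow> Sp v (f + int i) div n = Sp v f div n"
    proof (induction i)
      case 0 then show ?case by simp
    next
      case (Suc i)
      have a: "\<bar>Sp v (f + int (Suc i)) - Sp v (f + int i)\<bar> \<le> 1"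
        using lip[OF Z, of "f + int i" "f + int (Suc i)"] fl Suc.prems by auto
      have "Sp v (f + int (Suc i)) div n = Sp v (f + int i) div n"
        using same_block[OF a nonpiv nonpiv n1] fl Suc.prems by auto
      then show ?case using Suc by auto
    qed
  qed
  define ak where "ak = \<alpha> div n"
  have aeq: "\<alpha> = n * ak" using adv unfolding ak_def by simp
  have "Sp v l div n = Sp v f div n" using block[of "nat (l - f)"] fl by simp
  moreover have "Sp v f div n \<le> ak"
  proof -
    have "Sp v f div n \<le> (\<alpha> + (n - 1)) div n" using hf by (intro zdiv_mono1) (use n1 in auto)
    also have "(\<alpha> + (n - 1)) div n = ak" unfolding aeq using n1 by simp
    finally show ?thesis .
  qed
  moreover have "ak \<le> Sp v l div n" unfolding ak_def using hl n1 by (intro zdiv_mono1) auto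
  ultimately have qf: "Sp v f div n = ak" by simp
  have interior: "\<And>j. pl < j \<Longrightarrow> j < pr \<Longrightarrow> 0 \<le> j \<Longrightarrow> j \<le> m \<Longrightarrow> \<alpha> < Sp v j \<and> Sp v j < \<alpha> + n"
  proof -
    fix j assume j: "pl < j" "j < pr" "0 \<le> j" "j \<le> m"
    then have "Sp v j div n = ak" using block[of "nat (j - f)"] fl qf unfolding f_def l_def by simp
    moreover have "Sp v j = n * (Sp v j div n) + Sp v j mod n" by simp
    moreover have "0 \<le> Sp v j mod n" "Sp v j mod n < n" using n1 by simp_all
    ultimately have "n * ak \<le> Sp v j" "Sp v j < n * ak + n" by simp_all
    moreover have "Sp v j \<noteq> n * ak" using nonpiv[OF j(1,2)] by auto
    ultimately show "\<alpha> < Sp v j \<and> Sp v j < \<alpha> + n" using aeq by auto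
  qed
  have perj: "\<And>j. j \<in> {0..m} \<Longrightarrow> \<bar>Sp v j - \<alpha>\<bar> + \<bar>Sp v j - (\<alpha> + n)\<bar> \<le> n + 2 * max 0 (e - j) + 2 * max 0 (j - (m - e))"
  proof -
    fix j assume j: "j \<in> {0..m}"
    show "\<bar>Sp v j - \<alpha>\<bar> + \<bar>Sp v j - (\<alpha> + n)\<bar> \<le> n + 2 * max 0 (e - j) + 2 * max 0 (j - (m - e))"
    proof (cases "j \<le> pl")
      case True
      have "\<bar>Sp v pl - Sp v j\<bar> \<le> pl - j" using lip[OF Z, of j pl] True j pl_le e0 n1 by auto
      then show ?thesis unfolding \<alpha>_def using ple n1 by (smt (verit))
    next
      case False
      show ?thesis
      proof (cases "pr \<le> j")
        case True
        have "\<bar>Sp v j - Sp v pr\<bar> \<le> j - pr" using lip[OF Z, of pr j] True j pr_ge e0 n1 by auto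
        then show ?thesis using beta pre n1 by (smt (verit))
      next
        case False2: False
        then show ?thesis using interior[of j] False j by auto
      qed
    qed
  qed
  have "Fm m v \<alpha> + Fm m v (\<alpha> + n) = (\<Sum>j=0..m. \<bar>Sp v j - \<alpha>\<bar> + \<bar>Sp v j - (\<alpha> + n)\<bar>)"
    unfolding Fm_def by (simp add: sum.distrib)
  also have "\<dots> \<le> (\<Sum>j=0..m. n + 2 * max 0 (e - j) + 2 * max 0 (j - (m - e)))"
    using perj by (intro sum_mono) auto
  also have "\<dots> = (m+1)*n + 2 * (\<Sum>j=0..m. max 0 (e - j)) + 2 * (\<Sum>j=0..m. max 0 (j - (m - e)))"
    using nm n1 by (simp add: sum.distrib sum_distrib_left[symmetric])
  also have "\<dots> = (m+1)*n + 2*e*(e+1)" using sumA[of e m] sumB[of e m] e0 nm n1 by (simp add: algebra_simps)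
  finally have tot: "Fm m v \<alpha> + Fm m v (\<alpha> + n) \<le> (m+1)*n + 2*e*(e+1)" .
  show ?thesis
  proof (cases "Fm m v \<alpha> \<le> Fm m v (\<alpha> + n)")
    case True then show ?thesis using tot adv unfolding e_def by (intro exI[of _ \<alpha>]) auto
  next
    case False then show ?thesis using tot adv unfolding e_def by (intro exI[of _ "\<alpha> + n"]) auto
  qed
qed




lemma line_bound:
  fixes f :: "int \<Rightarrow> int"
  shows "(\<Sum>j=0..m. if j \<le> x then c - f j else f j - c) \<le> (\<Sum>j=0..m. \<bar>f j - c\<bar>)"
  by (intro sum_mono) auto

lemma Gform:
  fixes x m d :: int
  assumes "-1 \<le> x" "x \<le> m"
  shows "2*(\<Sum>j=0..m. if j \<le> x then d - j else j - d) = 2*(x+1)*d - x*(x+1) + (m-x)*(x+1+m) - 2*(m-x)*d"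
proof -
  have un: "{0..m} = {0..x} \<union> {x+1..m}" "{0..x} \<inter> {x+1..m} = {}" using assms by auto
  have "(\<Sum>j=0..m. if j \<le> x then d - j else j - d) = (\<Sum>j=0..x. if j \<le> x then d - j else j - d) + (\<Sum>j=x+1..m. if j \<le> x then d - j else j - d)"
    unfolding un(1) by (rule sum.union_disjoint) (use un in auto)
  also have "\<dots> = (\<Sum>j=0..x. d - j) + (\<Sum>j=x+1..m. j - d)" by (intro arg_cong2[where f="(+)"] sum.cong) auto
  also have "\<dots> = ((x+1)*d - (\<Sum>j=0..x. j)) + ((\<Sum>j=x+1..m. j) - (m-x)*d)"
    using assms by (simp add: sum_subtractf)
  finally have "2*(\<Sum>j=0..m. if j \<le> x then d - j else j - d) = 2*(x+1)*d - 2*(\<Sum>j=0..x. j) + 2*(\<Sum>j=x+1..m. j) - 2*(m-x)*d"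
    by (simp add: algebra_simps)
  also have "\<dots> = 2*(x+1)*d - x*(x+1) + (m-x)*(x+1+m) - 2*(m-x)*d"
    using gauss_int[of 0 x] gauss_int[of "x+1" m] assms by (simp add: algebra_simps)
  finally show ?thesis .
qed

lemma corr_lt:
  fixes x m k :: int
  assumes "x < k" "0 \<le> k" "k \<le> m + 1"
  shows "(\<Sum>j=0..m. if j \<le> x then (if k \<le> j then 1 else 0) else (if k \<le> j then -1 else 0)) = -(m - k + 1)"
proof -
  have "(\<Sum>j=0..m. if j \<le> x then (if k \<le> j then 1 else 0) else (if k \<le> j then -1 else 0)) = (\<Sum>j=k..m. (-1::int))"
    using assms by (intro sum.mono_neutral_cong_right) auto
  then show ?thesis using assms by simp
qed

lemma corr_ge:
  fixes x m k :: int
  assumes "k - 1 \<le> x" "x \<le> m" "0 \<le> k"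
  shows "(\<Sum>j=0..m. if j \<le> x then (if k \<le> j then 1 else 0) else (if k \<le> j then -1 else 0)) = (x - k + 1) - (m - x)"
proof -
  have un: "{0..m} = {0..x} \<union> {x+1..m}" "{0..x} \<inter> {x+1..m} = {}" using assms by auto
  have "(\<Sum>j=0..m. if j \<le> x then (if k \<le> j then 1 else 0) else (if k \<le> j then -1 else 0)) =
     (\<Sum>j=0..x. if j \<le> x then (if k \<le> j then 1 else 0) else (if k \<le> j then -1 else 0)) + (\<Sum>j=x+1..m. if j \<le> x then (if k \<le> j then 1 else 0) else (if k \<le> j then -1 else (0::int)))"
    unfolding un(1) by (rule sum.union_disjoint) (use un in auto)
  also have "(\<Sum>j=0..x. if j \<le> x then (if k \<le> j then 1 else 0) else (if k \<le> j then -1 else (0::int))) = (\<Sum>j=k..x. 1)"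
    using assms by (intro sum.mono_neutral_cong_right) auto
  also have "(\<Sum>j=x+1..m. if j \<le> x then (if k \<le> j then 1 else 0) else (if k \<le> j then -1 else (0::int))) = (\<Sum>j=x+1..m. -1)"
    using assms by (intro sum.cong) auto
  finally show ?thesis using assms by simp
qed


lemma arith_even1:
  fixes e n q :: int
  assumes "1 < n" "0 \<le> e" "q \<le> 0"
  defines "m \<equiv> 2*e + n" and "d \<equiv> e + n*q"
  shows "(m+1)*n + 2*e*(e+1) \<le> (2*(e+1)*d - e*(e+1) + (m-e)*(e+1+m) - 2*(m-e)*d) + 1"
proof -
  have "0 \<le> (-q) * (n * (n - 1))" using assms by (intro mult_nonneg_nonneg) auto
  then show ?thesis unfolding m_def d_def by (simp add: algebra_simps)
qed

lemma arith_even2: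
  fixes e n q :: int
  assumes "1 < n" "0 \<le> e" "1 \<le> q"
  defines "m \<equiv> 2*e + n" and "d \<equiv> e + n*q" and "x \<equiv> e + n - 1"
  shows "(m+1)*n + 2*e*(e+1) \<le> (2*(x+1)*d - x*(x+1) + (m-x)*(x+1+m) - 2*(m-x)*d) + 1"
proof -
  have "0 \<le> (q - 1) * (n * (n - 1))" using assms by (intro mult_nonneg_nonneg) auto
  then show ?thesis unfolding m_def d_def x_def by (simp add: algebra_simps)
qed

lemma arith_odd1:
  fixes e n q k :: int
  assumes "1 < n" "0 \<le> e" "q \<le> 0" "m = 2*e + n + 1" "m + 1 \<le> 2*k" "2*k \<le> m + 2"
  defines "d \<equiv> e + n*q"
  shows "(m+1)*n + 2*e*(e+1) \<le> (2*(e+1)*d - e*(e+1) + (m-e)*(e+1+m) - 2*(m-e)*d) + 2*(-(m - k + 1)) + 1"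
proof -
  have "0 \<le> (-q) * (n * n)" using assms by (intro mult_nonneg_nonneg) auto
  then show ?thesis using assms unfolding d_def by (simp add: algebra_simps)
qed

lemma arith_odd2:
  fixes e n q k :: int
  assumes "1 < n" "0 \<le> e" "1 \<le> q" "m = 2*e + n + 1" "m + 1 \<le> 2*k" "2*k \<le> m + 2"
  defines "d \<equiv> e + n*q" and "x \<equiv> e + n"
  shows "(m+1)*n + 2*e*(e+1) \<le> (2*(x+1)*d - x*(x+1) + (m-x)*(x+1+m) - 2*(m-x)*d) + 2*((x - k + 1) - (m - x)) + 1"
proof -
  have "n*n*2 \<le> n*n*(q*2)" by (rule mult_left_mono) (use assms in auto)
  then have h: "n * (n * 2) \<le> n * (n * (q * 2))" by (simp add: algebra_simps)
  show ?thesis using assms unfolding d_def x_def apply (simp add: algebra_simps) using h by linarith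
qed


lemma k_ceil: "\<lceil>real_of_int (m + 1) / 2\<rceil> = (m + 2) div 2"
proof (rule ceiling_unique)
  have "2 * ((m + 2) div 2) = m + 2 \<or> 2 * ((m + 2) div 2) = m + 1" by presburger
  then have "real_of_int (2 * ((m + 2) div 2)) = real_of_int (m + 2) \<or> real_of_int (2 * ((m + 2) div 2)) = real_of_int (m + 1)"
    by auto
  then show "real_of_int ((m + 2) div 2) - 1 < real_of_int (m + 1) / 2"
    "real_of_int (m + 1) / 2 \<le> real_of_int ((m + 2) div 2)" by auto
qed

lemma Sp_u0:
  assumes "1 < n" "n \<le> m" "0 \<le> p" "p \<le> m"
  shows "Sp (u0Z n m) p = (- ((m - n) div 2)) mod n + p"
proof -
  have "Sp (u0Z n m) p = Sp (u0Z n m) 0 + (\<Sum>i=1..p. u0Z n m i)" using Sp_split[of 0 p] assms by simp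
  also have "(\<Sum>i=1..p. u0Z n m i) = (\<Sum>i=1..p. 1)" using assms by (intro sum.cong) (auto simp: u0Z_def Let_def)
  also have "Sp (u0Z n m) 0 = (- ((m - n) div 2)) mod n" by (simp add: Sp_at0 u0Z_def Let_def)
  finally show ?thesis using assms by simp
qed

lemma Sp_u1:
  assumes "1 < n" "n \<le> m" "0 \<le> p" "p \<le> m"
  shows "Sp (u1Z n m) p = (- ((m - n) div 2)) mod n + p - (if (m + 2) div 2 \<le> p then 1 else 0)"
proof -
  define k where "k = (m + 2) div 2"
  have k: "2 \<le> k" "k \<le> m" using assms unfolding k_def by auto
  have u: "u1Z n m = (\<lambda>i. if i = k then 0
          else if 1 \<le> i \<and> i \<le> m then 1 else if i = 0 then (- ((m - n) div 2)) mod n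
          else if i = m + 1 then (- ((- ((m - n) div 2)) mod n + m - 1)) mod n else 0)"
    unfolding u1Z_def k_ceil k_def Let_def by simp
  have "Sp (u1Z n m) p = Sp (u1Z n m) 0 + (\<Sum>i=1..p. u1Z n m i)" using Sp_split[of 0 p] assms by simp
  also have "(\<Sum>i=1..p. u1Z n m i) = (\<Sum>i=1..p. 1 - (if i = k then 1 else 0))" using assms unfolding u by (intro sum.cong) auto
  also have "\<dots> = p - (if k \<in> {1..p} then 1 else 0)" using assms by (simp add: sum_subtractf sum.delta)
  also have "Sp (u1Z n m) 0 = (- ((m - n) div 2)) mod n" using k unfolding u by (simp add: Sp_at0)
  finally show ?thesis using k unfolding k_def[symmetric] by auto
qed

lemma c0_form: "\<exists>r. (- e) mod n = - e + n * (r::int)"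
  by (metis minus_div_mult_eq_mod mult.commute diff_conv_add_uminus mult_minus_right)

lemma D_even:
  assumes n1: "1 < n" and nm: "n \<le> m" and ev: "even (m - n)" and c: "n dvd c"
  shows "(m+1)*n + 2*((m-n) div 2)*((m-n) div 2+1) \<le> 2 * Fm m (u0Z n m) c + 1"
proof -
  define e where "e = (m - n) div 2"
  have me: "m = 2*e + n" "0 \<le> e" using ev nm unfolding e_def by auto
  define c0 where "c0 = (- e) mod n"
  obtain r where r: "c0 = -e + n*r" using c0_form unfolding c0_def by blast
  obtain a where a: "c = n * a" using c by blast
  define q where "q = a - r"
  define d where "d = c - c0"
  have dq: "d = e + n*q" unfolding d_def q_def using r a by (simp add: algebra_simps)
  have F: "Fm m (u0Z n m) c = (\<Sum>j=0..m. \<bar>(c0 + j) - c\<bar>)"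
    unfolding Fm_def c0_def e_def using Sp_u0[OF n1 nm] by (intro sum.cong) auto
  have low: "\<And>x. -1 \<le> x \<Longrightarrow> x \<le> m \<Longrightarrow> 2*(x+1)*d - x*(x+1) + (m-x)*(x+1+m) - 2*(m-x)*d \<le> 2 * Fm m (u0Z n m) c"
  proof -
    fix x assume x: "-1 \<le> x" "x \<le> m"
    have "(\<Sum>j=0..m. if j \<le> x then d - j else j - d) = (\<Sum>j=0..m. if j \<le> x then c - (c0 + j) else (c0 + j) - c)"
      unfolding d_def by (intro sum.cong) auto
    also have "\<dots> \<le> Fm m (u0Z n m) c" unfolding F by (rule line_bound)
    finally show "2*(x+1)*d - x*(x+1) + (m-x)*(x+1+m) - 2*(m-x)*d \<le> 2 * Fm m (u0Z n m) c"
      using Gform[OF x, of d] by simp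
  qed
  show ?thesis
  proof (cases "q \<le> 0")
    case True
    have "(m+1)*n + 2*e*(e+1) \<le> (2*(e+1)*d - e*(e+1) + (m-e)*(e+1+m) - 2*(m-e)*d) + 1"
      using arith_even1[of n e q] n1 me True unfolding dq by simp
    then show ?thesis using low[of e] me n1 unfolding e_def by simp
  next
    case False
    have "(m+1)*n + 2*e*(e+1) \<le> (2*((e+n-1)+1)*d - (e+n-1)*((e+n-1)+1) + (m-(e+n-1))*((e+n-1)+1+m) - 2*(m-(e+n-1))*d) + 1"
      using arith_even2[of n e q] n1 me False unfolding dq by simp
    then show ?thesis using low[of "e+n-1"] me n1 unfolding e_def by simp
  qed
qed

lemma D_odd:
  assumes n1: "1 < n" and nm: "n \<le> m" and od: "odd (m - n)" and c: "n dvd c"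
  shows "(m+1)*n + 2*((m-n) div 2)*((m-n) div 2+1) \<le> 2 * Fm m (u1Z n m) c + 1"
proof -
  define e where "e = (m - n) div 2"
  have me1: "m = 2*e + n + 1" using od unfolding e_def by presburger
  have me: "m = 2*e + n + 1" "0 \<le> e" using me1 nm unfolding e_def by auto
  define k where "k = (m + 2) div 2"
  have k: "m + 1 \<le> 2*k" "2*k \<le> m + 2" unfolding k_def by auto
  define c0 where "c0 = (- e) mod n"
  obtain r where r: "c0 = -e + n*r" using c0_form unfolding c0_def by blast
  obtain a where a: "c = n * a" using c by blast
  define q where "q = a - r"
  define d where "d = c - c0"
  have dq: "d = e + n*q" unfolding d_def q_def using r a by (simp add: algebra_simps)
  have F: "Fm m (u1Z n m) c = (\<Sum>j=0..m. \<bar>(c0 + j - (if k \<le> j then 1 else 0)) - c\<bar>)"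
    unfolding Fm_def c0_def e_def k_def using Sp_u1[OF n1 nm] by (intro sum.cong) auto
  have low: "\<And>x. -1 \<le> x \<Longrightarrow> x \<le> m \<Longrightarrow> 2*(x+1)*d - x*(x+1) + (m-x)*(x+1+m) - 2*(m-x)*d
      + 2 * (\<Sum>j=0..m. if j \<le> x then (if k \<le> j then 1 else 0) else (if k \<le> j then -1 else 0)) \<le> 2 * Fm m (u1Z n m) c"
  proof -
    fix x assume x: "-1 \<le> x" "x \<le> m"
    have "(\<Sum>j=0..m. if j \<le> x then d - j else j - d) + (\<Sum>j=0..m. if j \<le> x then (if k \<le> j then 1 else 0) else (if k \<le> j then -1 else 0))
        = (\<Sum>j=0..m. if j \<le> x then c - (c0 + j - (if k \<le> j then 1 else 0)) else (c0 + j - (if k \<le> j then 1 else 0)) - c)"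
      unfolding d_def sum.distrib[symmetric] by (intro sum.cong) auto
    also have "\<dots> \<le> Fm m (u1Z n m) c" unfolding F by (rule line_bound)
    finally show "2*(x+1)*d - x*(x+1) + (m-x)*(x+1+m) - 2*(m-x)*d
      + 2 * (\<Sum>j=0..m. if j \<le> x then (if k \<le> j then 1 else 0) else (if k \<le> j then -1 else 0)) \<le> 2 * Fm m (u1Z n m) c"
      using Gform[OF x, of d] by simp
  qed
  show ?thesis
  proof (cases "q \<le> 0")
    case True
    have cr: "(\<Sum>j=0..m. if j \<le> e then (if k \<le> j then 1 else 0) else (if k \<le> j then -1 else (0::int))) = -(m - k + 1)"
      using me k n1 by (intro corr_lt) auto
    have "(m+1)*n + 2*e*(e+1) \<le> (2*(e+1)*d - e*(e+1) + (m-e)*(e+1+m) - 2*(m-e)*d) + 2*(-(m - k + 1)) + 1"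
      using arith_odd1[of n e q m k] n1 me k True unfolding dq by simp
    then show ?thesis using low[of e] me n1 cr unfolding e_def by simp
  next
    case False
    have cr: "(\<Sum>j=0..m. if j \<le> e + n then (if k \<le> j then 1 else 0) else (if k \<le> j then -1 else (0::int))) = ((e + n) - k + 1) - (m - (e + n))"
      using me k n1 by (intro corr_ge) auto
    have "(m+1)*n + 2*e*(e+1) \<le> (2*((e+n)+1)*d - (e+n)*((e+n)+1) + (m-(e+n))*((e+n)+1+m) - 2*(m-(e+n))*d) + 2*(((e+n) - k + 1) - (m - (e+n))) + 1"
      using arith_odd2[of n e q m k] n1 me k False unfolding dq by simp
    then show ?thesis using low[of "e+n"] me n1 cr unfolding e_def by simp
  qed
qed



theorem lemma5p27:
  fixes n m :: int and v :: "int \<Rightarrow> int"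
  assumes "1 < n" and "n \<le> m"
    and "inZ n m v"
    and "hZ n m v \<ge> h_nm n m"
    and "(\<Sum>i\<in>I_c n m v. v i) = n"
  shows "distZ n m v zeroV \<le> D_nm n m"
proof -
  have m1: "1 \<le> m" using assms(1,2) by simp
  obtain c where c: "n dvd c" "2 * Fm m v c \<le> (m+1)*n + 2*((m-n) div 2)*((m-n) div 2 + 1)"
    using partC[OF assms] by blast
  have F0: "0 \<le> Fm m v c" unfolding Fm_def by (intro sum_nonneg) auto
  define K where "K = nat (Fm m v c)"
  have KF: "int K = Fm m v c" unfolding K_def using F0 by simp
  have up: "distZ n m v zeroV \<le> enat K" unfolding K_def by (rule dist_upper[OF assms(1) m1 assms(3) c(1)])
  show ?thesis
  proof (cases "even (m - n)")
    case True
    have "enat K \<le> distZ n m (u0Z n m) zeroV"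
    proof (rule dist_lower[OF m1])
      fix c' assume "n dvd c'"
      from D_even[OF assms(1,2) True this] c(2) KF show "int K \<le> Fm m (u0Z n m) c'" by linarith
    qed
    then show ?thesis using up True unfolding D_nm_def by simp
  next
    case False
    have "enat K \<le> distZ n m (u1Z n m) zeroV"
    proof (rule dist_lower[OF m1])
      fix c' assume "n dvd c'"
      from D_odd[OF assms(1,2) False this] c(2) KF show "int K \<le> Fm m (u1Z n m) c'" by linarith
    qed
    then have "distZ n m v zeroV \<le> distZ n m (u1Z n m) zeroV" using up by (rule order_trans[rotated])
    then show ?thesis using False unfolding D_nm_def by (simp add: le_max_iff_disj)
  qed
qed

end
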